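(* Let $\mathcal{I}$ be a finite set of items, $u$ a user with real-valued preference scores $s_{ui}$ for $i \in \mathcal{I}$, and $\mathcal{P}_u \subseteq \mathcal{I}$ the set of positive items of $u$. Let $K \ge 1$ be an integer and $\tau_w, \tau_d > 0$. Define the ranking position $\pi_{ui} = \sum_{j \in \mathcal{I}} \mathbb{I}(s_{uj} \ge s_{ui})$, $$\mathrm{DCG}@K(u) = \sum_{i \in \mathcal{P}_u} \frac{\mathbb{I}(\pi_{ui} \le K)}{\log_2(\pi_{ui}+1)},$$ the Top-$K$ quantile $\beta_u^K = \inf\{ s_{ui} : i \in \mathcal{I},\ \pi_{ui} \le K\}$, the number of Top-$K$ hits $H_u^K = \sum_{i \in \mathcal{P}_u} \mathbb{I}(s_{ui} \ge \beta_u^K)$, and the loss $$\mathcal{L}_{\mathrm{SL@}K}(u) = \sum_{i \in \mathcal{P}_u} \sigma_w(s_{ui} - \beta_u^K)\cdot \log\Big( \sum_{j \in \mathcal{I}} \exp\big((s_{uj} - s_{ui})/\tau_d\big)\Big),$$ where $\sigma_w(x) = 1/(1 + \exp(-x/\tau_w))$. If $H_u^K > 1$, then $-\log \mathrm{DCG}@K(u) \le \mathcal{L}_{\mathrm{SL@}K}(u)$. If $H_u^K = 1$, then $-\frac{1}{2}\log \mathrm{DCG}@K(u) \le \mathcal{L}_{\mathrm{SL@}K}(u)$.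
   Context: $\mathbb{I}(\cdot)$ is the indicator function and $\log$ denotes the natural logarithm. $\mathcal{L}_{\mathrm{SL@}K}$ is called SoftmaxLoss@$K$ in the paper. *)

theory Defs
  imports "HOL-Analysis.Analysis"
begin

definition rank_pos :: "'a set \<Rightarrow> ('a \<Rightarrow> real) \<Rightarrow> 'a \<Rightarrow> nat" where
  "rank_pos I s i = card {j \<in> I. s j \<ge> s i}"

definition DCG_at :: "'a set \<Rightarrow> 'a set \<Rightarrow> ('a \<Rightarrow> real) \<Rightarrow> nat \<Rightarrow> real" where
  "DCG_at I P s K =
     (\<Sum>i\<in>P. (if rank_pos I s i \<le> K then 1 else 0) / log 2 (real (rank_pos I s i) + 1))"

text \<open>Top-K quantile, as an infimum in the extended reals (Inf of the empty set is +infinity).\<close>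
definition topK_quantile :: "'a set \<Rightarrow> ('a \<Rightarrow> real) \<Rightarrow> nat \<Rightarrow> ereal" where
  "topK_quantile I s K = Inf {ereal (s i) | i. i \<in> I \<and> rank_pos I s i \<le> K}"

definition topK_hits :: "'a set \<Rightarrow> 'a set \<Rightarrow> ('a \<Rightarrow> real) \<Rightarrow> nat \<Rightarrow> nat" where
  "topK_hits I P s K = card {i \<in> P. ereal (s i) \<ge> topK_quantile I s K}"

definition sigma_w :: "real \<Rightarrow> real \<Rightarrow> real" where
  "sigma_w tw x = 1 / (1 + exp (- x / tw))"

definition softmax_loss_at :: "'a set \<Rightarrow> 'a set \<Rightarrow> ('a \<Rightarrow> real) \<Rightarrow> nat \<Rightarrow> real \<Rightarrow> real \<Rightarrow> real" where
  "softmax_loss_at I P s K tw td =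
     (\<Sum>i\<in>P. sigma_w tw (s i - real_of_ereal (topK_quantile I s K)) *
              ln (\<Sum>j\<in>I. exp ((s j - s i) / td)))"

end

theory Submission
  imports Defs
begin

lemma rank_ge1:
  assumes "finite I" "i \<in> I" shows "rank_pos I s i \<ge> 1"
proof -
  have "i \<in> {j \<in> I. s j \<ge> s i}" using assms by auto
  hence "card {j \<in> I. s j \<ge> s i} > 0" using assms by (auto simp: card_gt_0_iff)
  thus ?thesis unfolding rank_pos_def by simp
qed

lemma rank_mono:
  assumes "finite I" "s k \<le> s i" shows "rank_pos I s i \<le> rank_pos I s k"
  unfolding rank_pos_def using assms by (intro card_mono) auto

lemma ln_sum_ge:
  assumes "finite I" "i \<in> I" "td > 0"
  shows "ln (real (rank_pos I s i)) \<le> ln (\<Sum>j\<in>I. exp ((s j - s i) / td))"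
proof -
  let ?A = "{j \<in> I. s j \<ge> s i}"
  have "real (rank_pos I s i) = (\<Sum>j\<in>?A. 1)" unfolding rank_pos_def by simp
  also have "\<dots> \<le> (\<Sum>j\<in>?A. exp ((s j - s i) / td))"
    using assms by (intro sum_mono) auto
  also have "\<dots> \<le> (\<Sum>j\<in>I. exp ((s j - s i) / td))"
    using assms by (intro sum_mono2) auto
  finally show ?thesis using rank_ge1[OF assms(1,2), of s] by simp
qed

lemma log_le_self:
  fixes n :: nat assumes "n \<ge> 1" shows "log 2 (real n + 1) \<le> real n"
proof -
  have "real n + 1 \<le> 2 ^ n" using assms
  proof (induction n rule: nat_induct_at_least)
    case base then show ?case by simp
  next
    case (Suc n) then show ?case by simp
  qed
  hence "real n + 1 \<le> 2 powr real n" by (simp add: powr_realpow)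
  thus ?thesis by (simp add: log_le_iff le_log_iff)
qed

lemma hit_facts:
  assumes fin: "finite I" and PI: "P \<subseteq> I" and iP: "i \<in> P"
    and hit: "ereal (s i) \<ge> topK_quantile I s K" and tw: "tw > 0"
  shows "rank_pos I s i \<le> K"
    and "sigma_w tw (s i - real_of_ereal (topK_quantile I s K)) \<ge> 1/2"
proof -
  let ?S = "{ereal (s i) | i. i \<in> I \<and> rank_pos I s i \<le> K}"
  have Sfin: "finite ?S"
  proof -
    have "?S = (\<lambda>i. ereal (s i)) ` {i \<in> I. rank_pos I s i \<le> K}" by auto
    thus ?thesis using fin by simp
  qed
  have Sne: "?S \<noteq> {}"
  proof
    assume "?S = {}"
    hence "topK_quantile I s K = \<infinity>" unfolding topK_quantile_def
      by (metis Inf_empty top_ereal_def)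
    with hit show False by simp
  qed
  have "topK_quantile I s K \<in> ?S" unfolding topK_quantile_def
    using cInf_eq_Min[OF Sfin Sne] Min_in[OF Sfin Sne] by simp
  then obtain k where k: "k \<in> I" "rank_pos I s k \<le> K" "topK_quantile I s K = ereal (s k)" by auto
  have sk: "s k \<le> s i" using hit k by simp
  show "rank_pos I s i \<le> K" using rank_mono[OF fin sk] k by simp
  have "exp (- (s i - s k) / tw) \<le> 1" using sk tw by (simp add: divide_nonpos_pos)
  hence "1 / (1 + exp (- (s i - s k) / tw)) \<ge> 1/2"
    by (simp add: field_simps add_pos_pos)
  thus "sigma_w tw (s i - real_of_ereal (topK_quantile I s K)) \<ge> 1/2"
    using k unfolding sigma_w_def by simp
qed

lemma dcg_bound:
  assumes fin: "finite I" and PI: "P \<subseteq> I" and iP: "i \<in> P"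
    and rk: "rank_pos I s i \<le> K"
  shows "- ln (DCG_at I P s K) \<le> ln (real (rank_pos I s i))"
proof -
  let ?r = "rank_pos I s i"
  have r1: "?r \<ge> 1" using rank_ge1[OF fin] PI iP by auto
  have Lpos: "log 2 (real ?r + 1) > 0" using r1 by simp
  have nn: "\<And>j. 0 \<le> (if rank_pos I s j \<le> K then 1 else 0) / log 2 (real (rank_pos I s j) + 1)"
    by simp
  have "1 / log 2 (real ?r + 1) \<le> DCG_at I P s K"
    unfolding DCG_at_def
    using member_le_sum[of i P "\<lambda>j. (if rank_pos I s j \<le> K then 1 else 0) / log 2 (real (rank_pos I s j) + 1)"]
      nn iP rk finite_subset[OF PI fin] by simp
  hence "ln (1 / log 2 (real ?r + 1)) \<le> ln (DCG_at I P s K)" using Lpos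
    by (meson ln_le_cancel_iff divide_pos_pos zero_less_one order_less_le_trans)
  hence "- ln (DCG_at I P s K) \<le> ln (log 2 (real ?r + 1))" using Lpos by (simp add: ln_div)
  also have "\<dots> \<le> ln (real ?r)" using log_le_self[OF r1] Lpos by simp
  finally show ?thesis .
qed

theorem theorem3p2:
  fixes I P :: "'a set" and s :: "'a \<Rightarrow> real" and K :: nat and tw td :: real
  assumes "finite I" and "P \<subseteq> I" and "K \<ge> 1" and "tw > 0" and "td > 0"
  shows "(topK_hits I P s K > 1 \<longrightarrow> - ln (DCG_at I P s K) \<le> softmax_loss_at I P s K tw td)
       \<and> (topK_hits I P s K = 1 \<longrightarrow> - (1/2) * ln (DCG_at I P s K) \<le> softmax_loss_at I P s K tw td)"
proof -
  note fin = assms(1) and PI = assms(2) and tw = assms(4) and td = assms(5)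
  have finP: "finite P" using finite_subset[OF PI fin] .
  define f where "f i = sigma_w tw (s i - real_of_ereal (topK_quantile I s K)) *
              ln (\<Sum>j\<in>I. exp ((s j - s i) / td))" for i
  define Hs where "Hs = {i \<in> P. ereal (s i) \<ge> topK_quantile I s K}"
  have L: "softmax_loss_at I P s K tw td = sum f P" unfolding softmax_loss_at_def f_def by simp
  have sig_nn: "\<And>x. sigma_w tw x \<ge> 0" unfolding sigma_w_def
    by (simp add: add_pos_pos)
  have lnrk: "\<And>i. i \<in> P \<Longrightarrow> 0 \<le> ln (real (rank_pos I s i))"
    using rank_ge1[OF fin] PI by auto
  have fnn: "\<And>i. i \<in> P \<Longrightarrow> f i \<ge> 0"
  proof -
    fix i assume iP: "i \<in> P"
    have "0 \<le> ln (\<Sum>j\<in>I. exp ((s j - s i) / td))"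
      using ln_sum_ge[OF fin _ td, of i s] lnrk[OF iP] PI iP by auto
    thus "f i \<ge> 0" unfolding f_def using sig_nn by simp
  qed
  have fhit: "\<And>i. i \<in> Hs \<Longrightarrow> f i \<ge> (1/2) * ln (real (rank_pos I s i))
      \<and> - ln (DCG_at I P s K) \<le> ln (real (rank_pos I s i))"
  proof -
    fix i assume "i \<in> Hs"
    hence iP: "i \<in> P" and hit: "ereal (s i) \<ge> topK_quantile I s K" unfolding Hs_def by auto
    note hf = hit_facts[OF fin PI iP hit tw]
    have l: "ln (real (rank_pos I s i)) \<le> ln (\<Sum>j\<in>I. exp ((s j - s i) / td))"
      using ln_sum_ge[OF fin _ td, of i s] PI iP by auto
    have "(1/2) * ln (real (rank_pos I s i)) \<le> (1/2) * ln (\<Sum>j\<in>I. exp ((s j - s i) / td))"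
      using l by simp
    also have "\<dots> \<le> f i" unfolding f_def
      using hf(2) l lnrk[OF iP] by (intro mult_right_mono) auto
    finally show "f i \<ge> (1/2) * ln (real (rank_pos I s i))
      \<and> - ln (DCG_at I P s K) \<le> ln (real (rank_pos I s i))"
      using dcg_bound[OF fin PI iP hf(1)] by simp
  qed
  have HsP: "Hs \<subseteq> P" unfolding Hs_def by auto
  have sub: "\<And>A. A \<subseteq> P \<Longrightarrow> sum f A \<le> sum f P"
    using finP fnn by (intro sum_mono2) auto
  have hk: "topK_hits I P s K = card Hs" unfolding topK_hits_def Hs_def by simp
  show ?thesis
  proof (intro conjI impI)
    assume "topK_hits I P s K > 1"
    hence "card Hs > 1" using hk by simp
    then obtain a b where ab: "a \<in> Hs" "b \<in> Hs" "a \<noteq> b"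
      using card_le_Suc0_iff_eq[OF finite_subset[OF HsP finP]] by (metis One_nat_def not_le)
    have ha: "f a \<ge> (1/2) * ln (real (rank_pos I s a))"
      "- ln (DCG_at I P s K) \<le> ln (real (rank_pos I s a))" using fhit[OF ab(1)] by auto
    have hb: "f b \<ge> (1/2) * ln (real (rank_pos I s b))"
      "- ln (DCG_at I P s K) \<le> ln (real (rank_pos I s b))" using fhit[OF ab(2)] by auto
    have "sum f {a, b} = f a + f b" using ab by simp
    moreover have "sum f {a, b} \<le> sum f P" using ab HsP by (intro sub) auto
    ultimately show "- ln (DCG_at I P s K) \<le> softmax_loss_at I P s K tw td"
      using ha hb L by linarith
  next
    assume "topK_hits I P s K = 1"
    hence "card Hs = 1" using hk by simp
    then obtain a where a: "a \<in> Hs" by (metis card_1_singletonE insertI1)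
    have ha: "f a \<ge> (1/2) * ln (real (rank_pos I s a))"
      "- ln (DCG_at I P s K) \<le> ln (real (rank_pos I s a))" using fhit[OF a] by auto
    have "f a \<le> sum f P" using sub[of "{a}"] a HsP by auto
    thus "- (1/2) * ln (DCG_at I P s K) \<le> softmax_loss_at I P s K tw td"
      using ha L by linarith
  qed
qed

end
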